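(* Let $Z$ be a convex subset of a real vector space $V$, and let $p:V\to[0,\infty)$ be a seminorm such that $p(x)\leq a$ for all $x\in Z$, for some $a\geq 0$. Then for all $x,y\in Z$, $$p(x-y)\leq 2a\big(1-t_y(x)\big)\leq 2a\big(1-b(y)\big).$$
   Context: The weight function is $t_y(x)=\sup\{0\leq t<1 : \frac{y-tx}{1-t}\in Z\}$ for $x,y\in Z$, and the boundariness of $y\in Z$ is $b(y)=\inf_{x\in Z}t_y(x)$. *)

theory Defs
  imports "HOL-Analysis.Analysis"
begin

definition seminorm :: "('a::real_vector \<Rightarrow> real) \<Rightarrow> bool" where
  "seminorm p \<longleftrightarrow> (\<forall>x. 0 \<le> p x) \<and> (\<forall>x y. p (x + y) \<le> p x + p y)
     \<and> (\<forall>c x. p (c *\<^sub>R x) = \<bar>c\<bar> * p x)"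

definition weight :: "'a::real_vector set \<Rightarrow> 'a \<Rightarrow> 'a \<Rightarrow> real" where
  "weight Z y x = Sup {t. 0 \<le> t \<and> t < 1 \<and> (1 / (1 - t)) *\<^sub>R (y - t *\<^sub>R x) \<in> Z}"

definition boundariness :: "'a::real_vector set \<Rightarrow> 'a \<Rightarrow> real" where
  "boundariness Z y = Inf ((\<lambda>x. weight Z y x) ` Z)"

end

theory Submission
  imports Defs
begin

lemma weight_ge0:
  assumes "y \<in> Z"
  shows "0 \<le> weight Z y x"
proof -
  let ?S = "{t. 0 \<le> t \<and> t < 1 \<and> (1 / (1 - t)) *\<^sub>R (y - t *\<^sub>R x) \<in> Z}"
  have "0 \<in> ?S" using assms by simp
  moreover have "bdd_above ?S" by (rule bdd_aboveI[of _ 1]) auto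
  ultimately show ?thesis unfolding weight_def by (meson cSup_upper)
qed

theorem proposition2:
  fixes Z :: "'a::real_vector set" and p :: "'a \<Rightarrow> real" and a :: real
  assumes "convex Z"
    and "seminorm p"
    and "0 \<le> a"
    and "\<forall>x\<in>Z. p x \<le> a"
    and "x \<in> Z" and "y \<in> Z"
  shows "p (x - y) \<le> 2 * a * (1 - weight Z y x)
       \<and> 2 * a * (1 - weight Z y x) \<le> 2 * a * (1 - boundariness Z y)"
proof
  let ?S = "{t. 0 \<le> t \<and> t < 1 \<and> (1 / (1 - t)) *\<^sub>R (y - t *\<^sub>R x) \<in> Z}"
  have p0: "\<And>v. 0 \<le> p v" and padd: "\<And>u v. p (u + v) \<le> p u + p v"
    and phom: "\<And>c v. p (c *\<^sub>R v) = \<bar>c\<bar> * p v"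
    using assms(2) unfolding seminorm_def by auto
  have pminus: "\<And>u v. p (u - v) \<le> p u + p v"
    using padd phom[of "-1"] by (metis add_uminus_conv_diff abs_minus_cancel abs_one
        mult_1 scaleR_minus1_left)
  have key: "p (x - y) \<le> 2 * a * (1 - t)" if t: "t \<in> ?S" for t
  proof -
    define z where "z = (1 / (1 - t)) *\<^sub>R (y - t *\<^sub>R x)"
    have zZ: "z \<in> Z" using t z_def by simp
    have t1: "t < 1" "0 \<le> t" using t by auto
    have "(1 - t) *\<^sub>R z = y - t *\<^sub>R x" using t1 unfolding z_def by simp
    hence "x - y = (1 - t) *\<^sub>R (x - z)"
      by (simp add: algebra_simps)
    hence "p (x - y) = (1 - t) * p (x - z)" using phom t1 by simp
    also have "\<dots> \<le> (1 - t) * (p x + p z)"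
      using pminus t1 by (simp add: mult_left_mono)
    also have "\<dots> \<le> (1 - t) * (a + a)"
      using assms(4) assms(5) zZ t1 by (intro mult_left_mono add_mono) auto
    finally show ?thesis by (simp add: mult.commute)
  qed
  have "0 \<in> ?S" using assms(6) by simp
  hence ne: "?S \<noteq> {}" by blast
  show A: "p (x - y) \<le> 2 * a * (1 - weight Z y x)"
  proof (cases "a = 0")
    case True
    then show ?thesis using key[of 0] assms(6) by simp
  next
    case False
    hence ap: "a > 0" using assms(3) by simp
    have "Sup ?S \<le> 1 - p (x - y) / (2 * a)"
    proof (rule cSup_least[OF ne])
      fix t assume "t \<in> ?S"
      from key[OF this] ap show "t \<le> 1 - p (x - y) / (2 * a)"
        by (simp add: field_simps)
    qed
    thus ?thesis using ap unfolding weight_def by (simp add: field_simps)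
  qed
next
  have bdd: "bdd_below ((\<lambda>x. weight Z y x) ` Z)"
    using weight_ge0[OF assms(6)] by (intro bdd_belowI[of _ 0]) auto
  have "boundariness Z y \<le> weight Z y x"
    unfolding boundariness_def using assms(5) bdd by (simp add: cInf_lower)
  thus "2 * a * (1 - weight Z y x) \<le> 2 * a * (1 - boundariness Z y)"
    using assms(3) by (simp add: mult_left_mono)
qed

end
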